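(* Assume the setting described in the context, assume $(L-1)\mathfrak m\neq0$, let $\xi=(\xi_1,\dots,\xi_{\ell_L})\in\mathbb R^{\ell_L}$ satisfy $\xi_1=\mathfrak m^{-1}\int_{[a,b]^{\ell_0}}f_1(x)\,\mu(dx)$, for $i,j\in\mathbb N_0$, $k\in\mathbb N$ let $\alpha_{i,j,k}=i\ell_{k-1}+j+\sum_{h=1}^{k-1}\ell_h(\ell_{h-1}+1)$, and let $\theta=(\theta_1,\dots,\theta_{\mathfrak d})$, $\vartheta=(\vartheta_1,\dots,\vartheta_{\mathfrak d})\in\mathbb R^{\mathfrak d}$ satisfy for all $i\in\{1,\dots,\ell_L\}$ and all $j\in\{1,\dots,\mathfrak d\}\setminus\big(\bigcup_{k=1}^{\ell_L}\{\alpha_{\ell_{L-1},1,L-1},\alpha_{0,1,L},\alpha_{\ell_L,k,L}\}\big)$ that $\theta_{\alpha_{\ell_{L-1},1,L-1}}=\vartheta_{\alpha_{0,1,L}}=1$, $\theta_{\alpha_{\ell_L,i,L}}=\vartheta_{\alpha_{\ell_L,i,L}}=\xi_i$, and $\theta_{\alpha_{0,1,L}}=\vartheta_{\alpha_{\ell_{L-1},1,L-1}}=\theta_j=\vartheta_j=0$. Then $$\mathcal L_\infty\Big(\frac{\theta+\vartheta}2\Big)=\Big[\frac{\mathcal L_\infty(\theta)+\mathcal L_\infty(\vartheta)}2\Big]+\frac{\mathfrak m}{16}>\frac{\mathcal L_\infty(\theta)+\mathcal L_\infty(\vartheta)}2.$$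
   Context: Setting. Let $L,\mathfrak d\in\mathbb N=\{1,2,\dots\}$, $(\ell_k)_{k\in\mathbb N_0}\subseteq\mathbb N$, $a\in\mathbb R$, $b\in(a,\infty)$ with $\mathfrak d=\sum_{k=1}^L\ell_k(\ell_{k-1}+1)$; let $\mathbf d_k=\sum_{h=1}^k\ell_h(\ell_{h-1}+1)$ for $k\in\mathbb N_0$. For $\theta=(\theta_1,\dots,\theta_{\mathfrak d})\in\mathbb R^{\mathfrak d}$, $k\in\{1,\dots,L\}$, $i\in\{1,\dots,\ell_k\}$, $j\in\{1,\dots,\ell_{k-1}\}$ let $\mathfrak w^{k,\theta}_{i,j}=\theta_{(i-1)\ell_{k-1}+j+\mathbf d_{k-1}}$ and $\mathfrak b^{k,\theta}_i=\theta_{\ell_k\ell_{k-1}+i+\mathbf d_{k-1}}$, let $\mathfrak w^{k,\theta}=(\mathfrak w^{k,\theta}_{i,j})_{i,j}\in\mathbb R^{\ell_k\times\ell_{k-1}}$, $\mathfrak b^{k,\theta}=(\mathfrak b^{k,\theta}_1,\dots,\mathfrak b^{k,\theta}_{\ell_k})\in\mathbb R^{\ell_k}$, and $\mathcal A^\theta_k(x)=\mathfrak b^{k,\theta}+\mathfrak w^{k,\theta}x$. Let $\mathfrak M_\infty(x_1,\dots,x_n)=(\max\{x_1,0\},\dots,\max\{x_n,0\})$ and $\|\cdot\|$ the Euclidean norm. Define $\mathcal N^{k,\theta}_\infty\colon\mathbb R^{\ell_0}\to\mathbb R^{\ell_k}$, $k\in\{1,\dots,L\}$, by $\mathcal N^{1,\theta}_\infty=\mathcal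 A^\theta_1$ and $\mathcal N^{k+1,\theta}_\infty(x)=\mathcal A^\theta_{k+1}(\mathfrak M_\infty(\mathcal N^{k,\theta}_\infty(x)))$. Let $\mu$ be a measure on the Borel $\sigma$-algebra of $[a,b]^{\ell_0}$ with $\mathfrak m=\mu([a,b]^{\ell_0})\in\mathbb R$, let $f=(f_1,\dots,f_{\ell_L})\colon[a,b]^{\ell_0}\to\mathbb R^{\ell_L}$ be measurable, and let $\mathcal L_\infty\colon\mathbb R^{\mathfrak d}\to\mathbb R$, $\mathcal L_\infty(\theta)=\int_{[a,b]^{\ell_0}}\|\mathcal N^{L,\theta}_\infty(x)-f(x)\|^2\,\mu(dx)$ (these integrals are real numbers as part of the setting). *)

theory Defs
  imports "HOL-Analysis.Analysis"
begin

text \<open>Architecture vectors l :: nat => nat (layer widths l_0, l_1, ...).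
  Parameter vectors theta in R^d are functions nat => real, only indices 1..d matter.
  Vectors in R^n are functions nat => real, only indices 1..n matter.\<close>

definition dd :: "(nat \<Rightarrow> nat) \<Rightarrow> nat \<Rightarrow> nat" where
  "dd l k = (\<Sum>h=1..k. l h * (l (h - 1) + 1))"

definition wgt :: "(nat \<Rightarrow> nat) \<Rightarrow> (nat \<Rightarrow> real) \<Rightarrow> nat \<Rightarrow> nat \<Rightarrow> nat \<Rightarrow> real" where
  "wgt l \<theta> k i j = \<theta> ((i - 1) * l (k - 1) + j + dd l (k - 1))"

definition bias :: "(nat \<Rightarrow> nat) \<Rightarrow> (nat \<Rightarrow> real) \<Rightarrow> nat \<Rightarrow> nat \<Rightarrow> real" where
  "bias l \<theta> k i = \<theta> (l k * l (k - 1) + i + dd l (k - 1))"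

definition affine_layer :: "(nat \<Rightarrow> nat) \<Rightarrow> (nat \<Rightarrow> real) \<Rightarrow> nat \<Rightarrow> (nat \<Rightarrow> real) \<Rightarrow> (nat \<Rightarrow> real)" where
  "affine_layer l \<theta> k x = (\<lambda>i. bias l \<theta> k i + (\<Sum>j=1..l (k - 1). wgt l \<theta> k i j * x j))"

definition relu_vec :: "(nat \<Rightarrow> real) \<Rightarrow> (nat \<Rightarrow> real)" where
  "relu_vec x = (\<lambda>i. max (x i) 0)"

text \<open>realization l theta k x = N^{k,theta}_infinity(x) for k >= 1 (value at k = 0 is irrelevant).\<close>
fun realization :: "(nat \<Rightarrow> nat) \<Rightarrow> (nat \<Rightarrow> real) \<Rightarrow> nat \<Rightarrow> (nat \<Rightarrow> real) \<Rightarrow> (nat \<Rightarrow> real)" where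
  "realization l \<theta> 0 x = x"
| "realization l \<theta> (Suc 0) x = affine_layer l \<theta> 1 x"
| "realization l \<theta> (Suc (Suc k)) x =
     affine_layer l \<theta> (Suc (Suc k)) (relu_vec (realization l \<theta> (Suc k) x))"

definition risk :: "(nat \<Rightarrow> nat) \<Rightarrow> nat \<Rightarrow> (nat \<Rightarrow> real) measure \<Rightarrow> ((nat \<Rightarrow> real) \<Rightarrow> nat \<Rightarrow> real)
    \<Rightarrow> (nat \<Rightarrow> real) \<Rightarrow> real" where
  "risk l L M f \<theta> =
     integral\<^sup>L M (\<lambda>x. (\<Sum>i=1..l L. (realization l \<theta> L x i - f x i)\<^sup>2))"

definition alpha :: "(nat \<Rightarrow> nat) \<Rightarrow> nat \<Rightarrow> nat \<Rightarrow> nat \<Rightarrow> nat" where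
  "alpha l i j k = i * l (k - 1) + j + (\<Sum>h=1..k - 1. l h * (l (h - 1) + 1))"

end

theory Submission
  imports Defs
begin

lemma dd_Suc: "dd l (Suc k) = dd l k + l (Suc k) * (l k + 1)"
  by (simp add: dd_def)

lemma dd_mono: "k \<le> k' \<Longrightarrow> dd l k \<le> dd l k'"
  unfolding dd_def by (rule sum_mono2) auto

lemma alpha_dd: "alpha l i j k = i * l (k - 1) + j + dd l (k - 1)"
  by (simp add: alpha_def dd_def)

lemma idx_le:
  fixes i j m n :: nat
  assumes "1 \<le> i" "i \<le> n" "j \<le> m"
  shows "(i - 1) * m + j \<le> n * m"
proof -
  have "(i - 1) * m + j \<le> (i - 1) * m + m" using assms by simp
  also have "\<dots> = i * m" using assms(1) by (cases i) auto
  also have "\<dots> \<le> n * m" using assms by simp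
  finally show ?thesis .
qed

lemma affine_zero:
  assumes k: "1 \<le> k" and z: "\<forall>j. dd l (k - 1) < j \<and> j \<le> dd l k \<longrightarrow> \<eta> j = 0"
    and i: "i \<in> {1..l k}"
  shows "affine_layer l \<eta> k y i = 0"
proof -
  obtain k' where kk: "k = Suc k'" using k by (cases k) auto
  have ddk: "dd l k = dd l k' + l k * (l k' + 1)" using kk dd_Suc by simp
  have "bias l \<eta> k i = 0" unfolding bias_def using i z ddk kk by auto
  moreover have "wgt l \<eta> k i j = 0" if j: "j \<in> {1..l (k-1)}" for j
  proof -
    have "(i - 1) * l k' + j \<le> l k * l k'" using j kk i idx_le[of i "l k" j "l k'"] by simp
    thus ?thesis unfolding wgt_def using z ddk kk j by (auto simp: algebra_simps)
  qed
  ultimately show ?thesis unfolding affine_layer_def by simp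
qed


lemma real_affine: "\<exists>y. realization l \<eta> (Suc K) x = affine_layer l \<eta> (Suc K) y"
  by (cases K) auto

lemma sum_single: "(\<Sum>j=1..(m::nat). (if j = 1 then t else (0::real))) = (if 1 \<le> m then t else 0)"
  by (simp add: sum.delta' )

lemma main_real:
  fixes \<eta> :: "nat \<Rightarrow> real" and l :: "nat \<Rightarrow> nat" and K :: nat
  defines "A \<equiv> l (Suc K) * l K + 1 + dd l K" and "B \<equiv> 1 + dd l (Suc K)"
    and "C \<equiv> \<lambda>i. l (Suc (Suc K)) * l (Suc K) + i + dd l (Suc K)"
  assumes l_pos: "\<forall>k. l k \<ge> 1"
    and z: "\<forall>j\<in>{1..dd l (Suc (Suc K))} - ({A, B} \<union> C ` {1..l (Suc (Suc K))}). \<eta> j = 0"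
    and hA: "\<eta> A = c" and hB: "\<eta> B = w" and hC: "\<forall>i\<in>{1..l (Suc (Suc K))}. \<eta> (C i) = \<xi> i"
  shows "\<forall>i\<in>{1..l (Suc (Suc K))}.
           realization l \<eta> (Suc (Suc K)) x i = \<xi> i + (if i = 1 then w * max c 0 else 0)"
proof -
  have ddS: "dd l (Suc K) = dd l K + l (Suc K) * (l K + 1)" by (rule dd_Suc)
  have ddSS: "dd l (Suc (Suc K)) = dd l (Suc K) + l (Suc (Suc K)) * (l (Suc K) + 1)" by (rule dd_Suc)
  have lK: "l K \<ge> 1" "l (Suc K) \<ge> 1" "l (Suc (Suc K)) \<ge> 1" using l_pos by auto
  have A_le: "A \<le> dd l (Suc K)" unfolding A_def ddS using lK by (simp add: algebra_simps)
  have C_ge: "C i > dd l (Suc K) + l (Suc (Suc K)) * l (Suc K)" if "i \<ge> 1" for i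
    unfolding C_def using that by simp
  have C_le: "C i \<le> dd l (Suc (Suc K))" if "i \<le> l (Suc (Suc K))" for i
    unfolding C_def ddSS using that by (simp add: algebra_simps)
  have low: "\<eta> j = 0" if "1 \<le> j" "j \<le> dd l K" for j
  proof -
    have "j \<le> dd l (Suc (Suc K))" using that dd_mono[of K "Suc (Suc K)" l] by simp
    moreover have "j \<noteq> A" "j \<noteq> B" using that ddS unfolding A_def B_def by auto
    moreover have "j \<notin> C ` {1..l (Suc (Suc K))}" using that ddS unfolding C_def by auto
    ultimately show ?thesis using z that by auto
  qed
  have layers: "\<forall>i\<in>{1..l k}. realization l \<eta> k x i = 0" if "1 \<le> k" "k \<le> K" for k
    using that
  proof (induction k)
    case 0 then show ?case by simp
  next
    case (Suc k)
    have zz: "\<forall>j. dd l (Suc k - 1) < j \<and> j \<le> dd l (Suc k) \<longrightarrow> \<eta> j = 0"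
      using low dd_mono[of "Suc k" K l] Suc.prems by auto
    show ?case
    proof (cases k)
      case 0 then show ?thesis using affine_zero[OF _ zz] by simp
    next
      case (Suc k') then show ?thesis using affine_zero[OF _ zz] by simp
    qed
  qed
  have midz: "\<forall>j. dd l K < j \<and> j \<le> dd l (Suc K) \<and> j \<noteq> A \<longrightarrow> \<eta> j = 0"
  proof (intro allI impI)
    fix j assume j: "dd l K < j \<and> j \<le> dd l (Suc K) \<and> j \<noteq> A"
    have "j \<le> dd l (Suc (Suc K))" using j ddSS by simp
    moreover have "j \<noteq> B" using j unfolding B_def by auto
    moreover have "j \<notin> C ` {1..l (Suc (Suc K))}" using j C_ge by force
    ultimately show "\<eta> j = 0" using z j by auto
  qed
  have mid: "realization l \<eta> (Suc K) x i = (if i = 1 then c else 0)" if i: "i \<in> {1..l (Suc K)}" for i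
  proof -
    obtain y where y: "realization l \<eta> (Suc K) x = affine_layer l \<eta> (Suc K) y"
      using real_affine by blast
    have b: "bias l \<eta> (Suc K) i = (if i = 1 then c else 0)"
    proof (cases "i = 1")
      case True then show ?thesis using hA unfolding bias_def A_def by simp
    next
      case False
      have "l (Suc K) * l K + i + dd l K \<noteq> A" unfolding A_def using False by simp
      moreover have "l (Suc K) * l K + i + dd l K \<le> dd l (Suc K)" using i ddS by (simp add: algebra_simps)
      moreover have "dd l K < l (Suc K) * l K + i + dd l K" using i by simp
      ultimately show ?thesis using False midz unfolding bias_def by auto
    qed
    have "wgt l \<eta> (Suc K) i j = 0" if j: "j \<in> {1..l K}" for j
    proof -
      have "(i - 1) * l K + j \<le> l (Suc K) * l K" using j i idx_le[of i "l (Suc K)" j "l K"] by simp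
      hence "(i - 1) * l K + j + dd l K < A" unfolding A_def by simp
      thus ?thesis unfolding wgt_def using midz A_le j by auto
    qed
    then show ?thesis using y b unfolding affine_layer_def by simp
  qed
  show ?thesis
  proof
    fix i assume i: "i \<in> {1..l (Suc (Suc K))}"
    have b: "bias l \<eta> (Suc (Suc K)) i = \<xi> i" using hC i unfolding bias_def C_def by simp
    have w: "wgt l \<eta> (Suc (Suc K)) i j * relu_vec (realization l \<eta> (Suc K) x) j
        = (if j = 1 then (if i = 1 then w * max c 0 else 0) else 0)" if j: "j \<in> {1..l (Suc K)}" for j
    proof (cases "j = 1")
      case False then show ?thesis using mid[OF j] unfolding relu_vec_def by simp
    next
      case True
      show ?thesis
      proof (cases "i = 1")
        case True then show ?thesis using \<open>j = 1\<close> mid[OF j] hB unfolding relu_vec_def wgt_def B_def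
          by (simp add: algebra_simps)
      next
        case False
        let ?x = "(i - 1) * l (Suc K) + 1 + dd l (Suc K)"
        have "(i - 1) * l (Suc K) + 1 \<le> l (Suc (Suc K)) * l (Suc K)" using i lK idx_le[of i "l (Suc (Suc K))" 1 "l (Suc K)"] by simp
        hence x1: "?x < dd l (Suc K) + l (Suc (Suc K)) * l (Suc K) + 1" by linarith
        have x2: "?x \<noteq> B" using False i lK unfolding B_def by simp
        have x3: "?x > A" using A_le by simp
        have "?x \<notin> C ` {1..l (Suc (Suc K))}"
        proof
          assume "?x \<in> C ` {1..l (Suc (Suc K))}"
          then obtain k where k: "k \<in> {1..l (Suc (Suc K))}" "?x = C k" by blast
          have "C k > dd l (Suc K) + l (Suc (Suc K)) * l (Suc K)" using C_ge k by simp
          thus False using x1 k by linarith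
        qed
        moreover have "?x \<le> dd l (Suc (Suc K))" using x1 ddSS by (simp add: algebra_simps)
        ultimately have "\<eta> ?x = 0" using z x2 x3 by auto
        then show ?thesis using \<open>j = 1\<close> False unfolding wgt_def by simp
      qed
    qed
    have "realization l \<eta> (Suc (Suc K)) x i = \<xi> i +
       (\<Sum>j=1..l (Suc K). (if j = 1 then (if i = 1 then w * max c 0 else 0) else 0))"
      using b w by (simp add: affine_layer_def)
    also have "\<dots> = \<xi> i + (if i = 1 then w * max c 0 else 0)"
      using sum_single[of "l (Suc K)"] lK by simp
    finally show "realization l \<eta> (Suc (Suc K)) x i = \<xi> i + (if i = 1 then w * max c 0 else 0)" .
  qed
qed

theorem corollary2p18:
  fixes L d :: nat and l :: "nat \<Rightarrow> nat" and a b :: real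
    and M :: "(nat \<Rightarrow> real) measure" and f :: "(nat \<Rightarrow> real) \<Rightarrow> nat \<Rightarrow> real"
    and \<xi> \<theta> \<phi> :: "nat \<Rightarrow> real"
  assumes L_pos: "L \<ge> 1"
    and l_pos: "\<forall>k. l k \<ge> 1"
    and ab: "a < b"
    and d_def: "d = (\<Sum>k=1..L. l k * (l (k - 1) + 1))"
    and M_sets: "sets M = sets (restrict_space (PiM {1..l 0} (\<lambda>_. lborel))
                                   (PiE {1..l 0} (\<lambda>_. {a..b})))"
    and M_fin: "emeasure M (space M) < \<infinity>"
    and f_meas: "\<forall>i\<in>{1..l L}. (\<lambda>x. f x i) \<in> borel_measurable M"
    and integr: "\<forall>\<eta>. integrable M (\<lambda>x. (\<Sum>i=1..l L. (realization l \<eta> L x i - f x i)\<^sup>2))"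
    and nonzero: "real (L - 1) * measure M (space M) \<noteq> 0"
    and xi1: "\<xi> 1 = inverse (measure M (space M)) * integral\<^sup>L M (\<lambda>x. f x 1)"
    and cond: "\<forall>i\<in>{1..l L}. \<forall>j\<in>{1..d} - (\<Union>k\<in>{1..l L}.
                  {alpha l (l (L - 1)) 1 (L - 1), alpha l 0 1 L, alpha l (l L) k L}).
               \<theta> (alpha l (l (L - 1)) 1 (L - 1)) = 1 \<and> \<phi> (alpha l 0 1 L) = 1 \<and>
               \<theta> (alpha l (l L) i L) = \<xi> i \<and> \<phi> (alpha l (l L) i L) = \<xi> i \<and>
               \<theta> (alpha l 0 1 L) = 0 \<and> \<phi> (alpha l (l (L - 1)) 1 (L - 1)) = 0 \<and>
               \<theta> j = 0 \<and> \<phi> j = 0"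
  shows "risk l L M f (\<lambda>j. (\<theta> j + \<phi> j) / 2)
           = (risk l L M f \<theta> + risk l L M f \<phi>) / 2 + measure M (space M) / 16
         \<and> (risk l L M f \<theta> + risk l L M f \<phi>) / 2 + measure M (space M) / 16
           > (risk l L M f \<theta> + risk l L M f \<phi>) / 2"
proof -
  let ?m = "measure M (space M)"
  have L1: "L - 1 \<noteq> 0" using nonzero by auto
  define K where "K = L - 2"
  have LK: "L = Suc (Suc K)" using L1 L_pos unfolding K_def by simp
  have m0: "?m \<noteq> 0" using nonzero by auto
  have mpos: "?m > 0" using m0 measure_nonneg[of M "space M"] by linarith
  have fm: "finite_measure M" using M_fin by (intro finite_measureI) auto
  define A where "A = l (Suc K) * l K + 1 + dd l K"
  define B where "B = 1 + dd l (Suc K)"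
  define C where "C = (\<lambda>i. l (Suc (Suc K)) * l (Suc K) + i + dd l (Suc K))"
  have dL: "d = dd l L" using d_def by (simp add: dd_def)
  have aA: "alpha l (l (L - 1)) 1 (L - 1) = A" unfolding A_def alpha_dd LK by simp
  have aB: "alpha l 0 1 L = B" unfolding B_def alpha_dd LK by simp
  have aC: "alpha l (l L) k L = C k" for k unfolding C_def alpha_dd LK by simp
  have lK: "l K \<ge> 1" "l (Suc K) \<ge> 1" "l (Suc (Suc K)) \<ge> 1" using l_pos by auto
  have ddS: "dd l (Suc K) = dd l K + l (Suc K) * (l K + 1)" by (rule dd_Suc)
  have ddSS: "dd l (Suc (Suc K)) = dd l (Suc K) + l (Suc (Suc K)) * (l (Suc K) + 1)" by (rule dd_Suc)
  define J where "J = {1..d} - (\<Union>k\<in>{1..l L}. {A, B, C k})"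
  have cond': "\<forall>i\<in>{1..l L}. \<forall>j\<in>J.
               \<theta> A = 1 \<and> \<phi> B = 1 \<and> \<theta> (C i) = \<xi> i \<and> \<phi> (C i) = \<xi> i \<and>
               \<theta> B = 0 \<and> \<phi> A = 0 \<and> \<theta> j = 0 \<and> \<phi> j = 0"
    using cond unfolding aA aB aC J_def .
  have j0: "1 + dd l K \<in> J"
  proof -
    have "1 + dd l K < A" unfolding A_def using lK by simp
    moreover have "A \<le> dd l (Suc K)" unfolding A_def ddS using lK by (simp add: algebra_simps)
    moreover have "dd l (Suc K) < B" "dd l (Suc K) < C k" if "k \<ge> 1" for k
      unfolding B_def C_def using that by auto
    moreover have "1 + dd l K \<le> d" using lK unfolding dL LK ddSS ddS by simp
    ultimately show ?thesis unfolding J_def by force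
  qed
  have l1: "1 \<in> {1..l L}" using l_pos by auto
  have hA: "\<theta> A = 1" "\<phi> A = 0" and hB: "\<theta> B = 0" "\<phi> B = 1"
    using cond'[rule_format, OF l1 j0] by auto
  have hC: "\<forall>i\<in>{1..l L}. \<theta> (C i) = \<xi> i \<and> \<phi> (C i) = \<xi> i"
    using cond' j0 by blast
  have hJ: "\<forall>j\<in>J. \<theta> j = 0 \<and> \<phi> j = 0" using cond' l1 by blast
  have J': "{1..dd l (Suc (Suc K))} - ({A, B} \<union> C ` {1..l (Suc (Suc K))}) \<subseteq> J"
    unfolding J_def dL LK by auto
  define \<mu> where "\<mu> = (\<lambda>j. (\<theta> j + \<phi> j) / 2)"
  have r\<theta>: "\<forall>i\<in>{1..l L}. realization l \<theta> L x i = \<xi> i" for x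
  proof -
    have z: "\<forall>j\<in>{1..dd l (Suc (Suc K))} - ({A, B} \<union> C ` {1..l (Suc (Suc K))}). \<theta> j = 0"
      using J' hJ by blast
    have c: "\<forall>i\<in>{1..l (Suc (Suc K))}. \<theta> (C i) = \<xi> i" using hC LK by simp
    show ?thesis using main_real[of l K \<theta> 1 0 \<xi> x, OF l_pos z[unfolded A_def B_def C_def]] hA hB c
      unfolding A_def B_def C_def LK by simp
  qed
  have r\<phi>: "\<forall>i\<in>{1..l L}. realization l \<phi> L x i = \<xi> i" for x
  proof -
    have z: "\<forall>j\<in>{1..dd l (Suc (Suc K))} - ({A, B} \<union> C ` {1..l (Suc (Suc K))}). \<phi> j = 0"
      using J' hJ by blast
    have c: "\<forall>i\<in>{1..l (Suc (Suc K))}. \<phi> (C i) = \<xi> i" using hC LK by simp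
    show ?thesis using main_real[of l K \<phi> 0 1 \<xi> x, OF l_pos z[unfolded A_def B_def C_def]] hA hB c
      unfolding A_def B_def C_def LK by simp
  qed
  have r\<mu>: "\<forall>i\<in>{1..l L}. realization l \<mu> L x i = \<xi> i + (if i = 1 then 1/4 else 0)" for x
  proof -
    have "\<forall>i\<in>{1..l L}. realization l \<mu> L x i = \<xi> i + (if i = 1 then 1/2 * max (1/2) 0 else 0)"
    proof -
      have z: "\<forall>j\<in>{1..dd l (Suc (Suc K))} - ({A, B} \<union> C ` {1..l (Suc (Suc K))}). \<mu> j = 0"
        using J' hJ unfolding \<mu>_def by auto
      have c: "\<forall>i\<in>{1..l (Suc (Suc K))}. \<mu> (C i) = \<xi> i" using hC LK unfolding \<mu>_def by simp
      have a: "\<mu> A = 1/2" "\<mu> B = 1/2" using hA hB unfolding \<mu>_def by auto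
      show ?thesis using main_real[of l K \<mu> "1/2" "1/2" \<xi> x, OF l_pos z[unfolded A_def B_def C_def]] a c
        unfolding A_def B_def C_def LK by simp
    qed
    thus ?thesis by simp
  qed
  define g where "g = (\<lambda>x. \<Sum>i=1..l L. (\<xi> i - f x i)\<^sup>2)"
  define h where "h = (\<lambda>x. (\<xi> 1 - f x 1) / 2 + 1/16)"
  have e\<theta>: "risk l L M f \<theta> = integral\<^sup>L M g"
    unfolding risk_def g_def using r\<theta> by (intro Bochner_Integration.integral_cong refl sum.cong) auto
  have e\<phi>: "risk l L M f \<phi> = integral\<^sup>L M g"
    unfolding risk_def g_def using r\<phi> by (intro Bochner_Integration.integral_cong refl sum.cong) auto
  have gm: "(\<Sum>i=1..l L. (realization l \<mu> L x i - f x i)\<^sup>2) = g x + h x" for x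
  proof -
    have "(\<Sum>i=1..l L. (realization l \<mu> L x i - f x i)\<^sup>2)
        = (\<Sum>i=1..l L. (\<xi> i - f x i)\<^sup>2 + (if i = 1 then h x else 0))"
      using r\<mu>[of x] unfolding h_def by (intro sum.cong refl) (auto simp: power2_eq_square field_simps)
    also have "\<dots> = g x + h x" unfolding g_def using l1 by (simp add: sum.distrib)
    finally show ?thesis .
  qed
  have e\<mu>: "risk l L M f \<mu> = integral\<^sup>L M (\<lambda>x. g x + h x)"
    unfolding risk_def using gm by simp
  have "g = (\<lambda>x. \<Sum>i=1..l L. (realization l \<theta> L x i - f x i)\<^sup>2)"
    unfolding g_def using r\<theta> by (intro ext sum.cong) auto
  hence ig: "integrable M g" using integr by simp
  have igh: "integrable M (\<lambda>x. g x + h x)" using integr[rule_format, of \<mu>] gm by simp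
  have ih: "integrable M h" using Bochner_Integration.integrable_diff[OF igh ig] by simp
  have if1: "integrable M (\<lambda>x. f x 1)"
  proof -
    have "integrable M (\<lambda>x. (\<xi> 1 + 1/8) - 2 * h x)"
      using ih finite_measure.integrable_const[OF fm] by (intro Bochner_Integration.integrable_diff Bochner_Integration.integrable_mult_right) auto
    moreover have "(\<lambda>x. (\<xi> 1 + 1/8) - 2 * h x) = (\<lambda>x. f x 1)" by (rule ext) (simp add: h_def field_simps)
    ultimately show ?thesis by simp
  qed
  have xm: "\<xi> 1 * ?m = integral\<^sup>L M (\<lambda>x. f x 1)" using xi1 m0 by simp
  have "integral\<^sup>L M h = (\<xi> 1 * ?m - integral\<^sup>L M (\<lambda>x. f x 1)) / 2 + ?m / 16"
  proof -
    have "integral\<^sup>L M h = integral\<^sup>L M (\<lambda>x. (\<xi> 1 - f x 1) / 2) + integral\<^sup>L M (\<lambda>x. 1/16)"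
      unfolding h_def using if1 finite_measure.integrable_const[OF fm]
      by (intro Bochner_Integration.integral_add) auto
    also have "integral\<^sup>L M (\<lambda>x. (\<xi> 1 - f x 1) / 2) = (integral\<^sup>L M (\<lambda>x. \<xi> 1) - integral\<^sup>L M (\<lambda>x. f x 1)) / 2"
    proof -
      have "integral\<^sup>L M (\<lambda>x. \<xi> 1 - f x 1) = integral\<^sup>L M (\<lambda>x. \<xi> 1) - integral\<^sup>L M (\<lambda>x. f x 1)"
        by (rule Bochner_Integration.integral_diff[OF finite_measure.integrable_const[OF fm] if1])
      thus ?thesis by simp
    qed
    finally show ?thesis by simp
  qed
  hence ihv: "integral\<^sup>L M h = ?m / 16" using xm by simp
  have "risk l L M f \<mu> = integral\<^sup>L M g + ?m / 16"
    unfolding e\<mu> using ig ih ihv by simp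
  thus ?thesis unfolding \<mu>_def e\<theta> e\<phi> using mpos by simp
qed

end
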